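(* In the setting below, for all $k,\ell\in\mathbb{N}_0$, \[ G_{k\ell}=\sum_{n\in\mathbb{N}_0}H_{kn}\,\rho^{-n}L_{n\ell}\,\rho^{\ell}, \] that is, $G=HV^{-1}LV$ as (densely defined) operators on $\ell^2(\mathbb{N}_0)$.
   Context: $T\colon[-1,1]\to[-1,1]$ is an analytic full branch map: there are closed intervals $I_1,\dots,I_d$ with disjoint interiors covering $[-1,1]$ such that $T|_{\mathrm{int}(I_\ell)}$ is an analytic diffeomorphism with $\overline{T(I_\ell)}=[-1,1]$; the inverse branches $\varphi_\ell$ extend to bounded holomorphic functions on $D_R=\{|z|<R\}$ with $\bigcup_\ell\varphi_\ell(D_R)\subseteq D_r$, $1<r<R$. The transfer operator is $(\mathcal{L}f)(z)=\sum_\ell\sigma_\ell\varphi_\ell'(z)f(\varphi_\ell(z))$ with $\sigma_\ell=\mathrm{sgn}(\varphi_\ell'(0))$; it satisfies $\int_{-1}^1g(T(x))f(x)\,dx=\int_{-1}^1g(x)(\mathcal{L}f)(x)\,dx$. Fix $\rho\in(r,R)$; $H^2(D_\rho)$ is the Hardy space on $D_\rho$ with inner product $(f,g)=\lim_{s\uparrow\rho}\frac1{2\pi}\int_0^{2\pi}f(se^{it})\overline{g(se^{it})}dt$ and orthonormal basis $e_n(z)=(z/\rho)^n$. Define $L_{k\ell}=(\mathcal{L}e_\ell,e_k)$, $H_{k\ell}=\frac12\int_{-1}^1x^kx^\ell dx$, $G_{k\ell}=\frac12\int_{-1}^1(T(x))^kx^\ell dx$ for $k,\ell\in\mathbb{N}_0$,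 and the diagonal operators $V\colon(x_n)\mapsto(\rho^nx_n)$, $V^{-1}\colon(x_n)\mapsto(\rho^{-n}x_n)$ on $\ell^2(\mathbb{N}_0)$. *)

theory Defs
  imports "HOL-Complex_Analysis.Complex_Analysis"
begin

definition real_analytic_on :: "(real \<Rightarrow> real) \<Rightarrow> real set \<Rightarrow> bool" where
  "real_analytic_on f S \<longleftrightarrow>
     (\<forall>x\<in>S. \<exists>e>0. \<exists>g. g holomorphic_on ball (complex_of_real x) e \<and>
        (\<forall>y. \<bar>y - x\<bar> < e \<longrightarrow> g (complex_of_real y) = complex_of_real (f y)))"

definition hardy_inner :: "real \<Rightarrow> (complex \<Rightarrow> complex) \<Rightarrow> (complex \<Rightarrow> complex) \<Rightarrow> complex" where
  "hardy_inner \<rho> f g = Lim (at_left \<rho>)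
     (\<lambda>s. complex_of_real (1 / (2 * pi)) *
          integral {0..2*pi} (\<lambda>t. f (complex_of_real s * cis t) * cnj (g (complex_of_real s * cis t))))"

definition hardy_basis :: "real \<Rightarrow> nat \<Rightarrow> complex \<Rightarrow> complex" where
  "hardy_basis \<rho> n z = (z / complex_of_real \<rho>) ^ n"

definition transfer_op :: "nat \<Rightarrow> (nat \<Rightarrow> complex \<Rightarrow> complex) \<Rightarrow> (complex \<Rightarrow> complex) \<Rightarrow> complex \<Rightarrow> complex" where
  "transfer_op d \<phi> f z = (\<Sum>l<d. sgn (deriv (\<phi> l) 0) * deriv (\<phi> l) z * f (\<phi> l z))"

definition Lmat :: "real \<Rightarrow> nat \<Rightarrow> (nat \<Rightarrow> complex \<Rightarrow> complex) \<Rightarrow> nat \<Rightarrow> nat \<Rightarrow> complex" where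
  "Lmat \<rho> d \<phi> k l = hardy_inner \<rho> (transfer_op d \<phi> (hardy_basis \<rho> l)) (hardy_basis \<rho> k)"

definition Hmat :: "nat \<Rightarrow> nat \<Rightarrow> real" where
  "Hmat k l = (1/2) * integral {-1..1} (\<lambda>x::real. x ^ k * x ^ l)"

definition Gmat :: "(real \<Rightarrow> real) \<Rightarrow> nat \<Rightarrow> nat \<Rightarrow> real" where
  "Gmat T k l = (1/2) * integral {-1..1} (\<lambda>x::real. (T x) ^ k * x ^ l)"

end

theory Submission
  imports Defs
begin

lemma coeff_aux: fixes w :: complex and s \<rho> :: real and y :: complex
  assumes "w \<noteq> 0" "s > 0" "\<rho> > 0"
  shows "(of_real s ^ (2*n) / of_real \<rho> ^ n / \<i>) * (y / (0 + s * w - 0) ^ Suc n * s * \<i> * w) = y * (of_real s * inverse w / of_real \<rho>) ^ n"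
proof -
  have "(of_real s ^ (2*n) / of_real \<rho> ^ n / \<i>) * (y / (0 + s * w - 0) ^ Suc n * s * \<i> * w) =
     y * (of_real s ^ (2*n) * (of_real s * w)) / (of_real \<rho> ^ n * (of_real s ^ Suc n * w ^ Suc n))"
    using assms by (simp add: power_mult_distrib field_simps)
  also have "\<dots> = y * (of_real s ^ n / (of_real \<rho> ^ n * w ^ n))"
    using assms by (simp add: mult_2 power_add)
  also have "\<dots> = y * (of_real s * inverse w / of_real \<rho>) ^ n"
    by (simp add: power_mult_distrib power_divide power_inverse divide_inverse)
  finally show ?thesis .
qed

lemma hardy_coeff:
  assumes holf: "f holomorphic_on ball 0 R" and rho: "0 < \<rho>" "\<rho> < R"
  shows "hardy_inner \<rho> f (hardy_basis \<rho> n) = (deriv ^^ n) f 0 / fact n * of_real \<rho> ^ n"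
proof -
  define c where "c = (deriv ^^ n) f 0 / fact n"
  have key: "complex_of_real (1 / (2 * pi)) *
          integral {0..2*pi} (\<lambda>t. f (complex_of_real s * cis t) * cnj (hardy_basis \<rho> n (complex_of_real s * cis t)))
        = of_real s ^ (2*n) / of_real \<rho> ^ n * c" if s: "0 < s" "s < R" for s
  proof -
    have "((\<lambda>u. f u / (u - 0) ^ Suc n) has_contour_integral ((2 * pi * \<i>) / (fact n) * (deriv ^^ n) f 0))
           (circlepath 0 s)"
    proof (rule Cauchy_has_contour_integral_higher_derivative_circlepath)
      have "cball 0 s \<subseteq> ball (0::complex) R" using s by auto
      then show "continuous_on (cball 0 s) f" "f holomorphic_on ball 0 s"
        using holf holomorphic_on_imp_continuous_on holomorphic_on_subset by (blast, force)
    qed (use s in auto)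
    then have "((\<lambda>t. f (0 + s * cis t) / (0 + s * cis t - 0) ^ Suc n * s * \<i> * cis t) has_integral
                 ((2 * pi * \<i>) / (fact n) * (deriv ^^ n) f 0)) {0..2*pi}"
      unfolding circlepath_def by (subst (asm) has_contour_integral_part_circlepath_iff) auto
    then have "((\<lambda>t. (of_real s ^ (2*n) / of_real \<rho> ^ n / \<i>) * (f (0 + s * cis t) / (0 + s * cis t - 0) ^ Suc n * s * \<i> * cis t)) has_integral
                 (of_real s ^ (2*n) / of_real \<rho> ^ n / \<i>) * ((2 * pi * \<i>) / (fact n) * (deriv ^^ n) f 0)) {0..2*pi}"
      by (rule has_integral_mult_right)
    moreover have eqt:  "(of_real s ^ (2*n) / of_real \<rho> ^ n / \<i>) * (f (0 + s * cis t) / (0 + s * cis t - 0) ^ Suc n * s * \<i> * cis t)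
         = f (complex_of_real s * cis t) * cnj (hardy_basis \<rho> n (complex_of_real s * cis t))" for t
    proof -
      have w0: "cis t \<noteq> 0" by simp
      have cw: "cnj (cis t) = inverse (cis t)" by (simp add: cis_cnj cis_inverse)
      have "cnj (hardy_basis \<rho> n (complex_of_real s * cis t)) = (of_real s * inverse (cis t) / of_real \<rho>) ^ n"
        by (simp only: hardy_basis_def complex_cnj_power complex_cnj_divide complex_cnj_mult complex_cnj_complex_of_real cw)
      then show ?thesis using coeff_aux[OF w0 s(1) rho(1)] by simp
    qed
    ultimately have "((\<lambda>t. f (complex_of_real s * cis t) * cnj (hardy_basis \<rho> n (complex_of_real s * cis t))) has_integral
                 (of_real s ^ (2*n) / of_real \<rho> ^ n / \<i>) * ((2 * pi * \<i>) / (fact n) * (deriv ^^ n) f 0)) {0..2*pi}"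
      by (rule has_integral_eq[rotated])
    then have "integral {0..2*pi} (\<lambda>t. f (complex_of_real s * cis t) * cnj (hardy_basis \<rho> n (complex_of_real s * cis t)))
       = (of_real s ^ (2*n) / of_real \<rho> ^ n / \<i>) * ((2 * pi * \<i>) / (fact n) * (deriv ^^ n) f 0)"
      by (rule integral_unique)
    then show ?thesis by (simp add: c_def field_simps)
  qed
  have "((\<lambda>s. complex_of_real (1 / (2 * pi)) *
          integral {0..2*pi} (\<lambda>t. f (complex_of_real s * cis t) * cnj (hardy_basis \<rho> n (complex_of_real s * cis t))))
        \<longlongrightarrow> of_real \<rho> ^ (2*n) / of_real \<rho> ^ n * c) (at_left \<rho>)"
  proof (rule Lim_transform_eventually)
    show "((\<lambda>s. of_real s ^ (2*n) / of_real \<rho> ^ n * c) \<longlongrightarrow> of_real \<rho> ^ (2*n) / of_real \<rho> ^ n * c) (at_left \<rho>)"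
      using rho by (intro tendsto_intros) auto
    have "eventually (\<lambda>s. s \<in> {0<..<\<rho>}) (at_left \<rho>)" using rho by (intro eventually_at_left_real) auto
    then show "eventually (\<lambda>s. of_real s ^ (2*n) / of_real \<rho> ^ n * c = complex_of_real (1 / (2 * pi)) *
          integral {0..2*pi} (\<lambda>t. f (complex_of_real s * cis t) * cnj (hardy_basis \<rho> n (complex_of_real s * cis t)))) (at_left \<rho>)"
      proof eventually_elim
      case (elim s)
      then have "0 < s" "s < R" using rho by auto
      from key[OF this] show ?case by simp
    qed
  qed
  then have "hardy_inner \<rho> f (hardy_basis \<rho> n) = of_real \<rho> ^ (2*n) / of_real \<rho> ^ n * c"
    unfolding hardy_inner_def by (intro tendsto_Lim) (simp_all add: trivial_limit_at_left_real)
  also have "\<dots> = c * of_real \<rho> ^ n"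
  proof -
    have "of_real \<rho> ^ (2*n) = (of_real \<rho> ^ n * of_real \<rho> ^ n :: complex)" by (simp only: mult_2 power_add)
    then show ?thesis using rho by simp
  qed
  finally show ?thesis by (simp add: c_def)
qed

lemma series_integral:
  assumes holf: "f holomorphic_on ball 0 R" and R: "1 < R"
  shows "(\<lambda>n. complex_of_real (Hmat k n) * ((deriv ^^ n) f 0 / fact n)) sums
           (of_real (1/2) * integral {-1..1} (\<lambda>x. of_real x ^ k * f (of_real x)))"
proof -
  define c where "c n = (deriv ^^ n) f 0 / fact n" for n
  have ps: "(\<lambda>n. c n * x^n) sums f x" if "x \<in> ball 0 R" for x
    using holomorphic_power_series[OF holf that] by (simp add: c_def)
  have "summable (\<lambda>n. c n * (of_real ((1+R)/2))^n)"
  proof -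
    have "of_real ((1+R)/2) \<in> ball (0::complex) R" unfolding mem_ball dist_0_norm norm_of_real using R by simp
    from ps[OF this] show ?thesis by (simp add: sums_iff)
  qed
  then have "summable (\<lambda>n. norm (c n * 1^n))"
    by (rule powser_insidea) (use R in \<open>simp only: norm_of_real norm_one, simp\<close>)
  then have sc: "summable (\<lambda>n. norm (c n))" by simp
  define F where "F n x = complex_of_real x ^ k * (c n * complex_of_real x ^ n)" for n x
  have "uniform_limit {-1..1} (\<lambda>N x. \<Sum>i<N. F i x) (\<lambda>x. suminf (\<lambda>i. F i x)) sequentially"
  proof (rule Weierstrass_m_test[OF _ sc])
    fix n and x :: real assume "x \<in> {-1..1}"
    then have "\<bar>x\<bar> \<le> 1" by auto
    then have "norm (F n x) = \<bar>x\<bar>^k * norm (c n) * \<bar>x\<bar>^n"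
      by (simp add: F_def norm_mult norm_power)
    also have "\<dots> \<le> 1 * norm (c n) * 1"
      using \<open>\<bar>x\<bar> \<le> 1\<close> by (intro mult_mono power_le_one) auto
    finally show "norm (F n x) \<le> norm (c n)" by simp
  qed
  moreover have "continuous_on {-1..1} (\<lambda>x. \<Sum>i<N. F i x)" for N
    unfolding F_def by (intro continuous_intros)
  ultimately obtain I J where IJ: "\<And>N. ((\<lambda>x. \<Sum>i<N. F i x) has_integral I N) {-1..1}"
    "((\<lambda>x. suminf (\<lambda>i. F i x)) has_integral J) {-1..1}" "I \<longlonglongrightarrow> J"
    by (rule uniform_limit_integral) auto
  have Fi: "(F i has_integral (c i * of_real (integral {-1..1} (\<lambda>x::real. x ^ k * x ^ i)))) {-1..1}" for i
  proof -
    have "((\<lambda>x::real. x ^ k * x ^ i) has_integral integral {-1..1} (\<lambda>x::real. x ^ k * x ^ i)) {-1..1}"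
      by (intro integrable_integral integrable_continuous_real continuous_intros)
    from has_integral_linear[OF this bounded_linear_of_real]
    have "((\<lambda>x. complex_of_real (x ^ k * x ^ i)) has_integral of_real (integral {-1..1} (\<lambda>x::real. x ^ k * x ^ i))) {-1..1}"
      by (simp add: o_def)
    from has_integral_mult_right[OF this, of "c i"] show ?thesis
      by (simp add: F_def[abs_def] mult_ac)
  qed
  have IN: "I N = (\<Sum>i<N. c i * of_real (integral {-1..1} (\<lambda>x::real. x ^ k * x ^ i)))" for N
    using has_integral_unique[OF IJ(1)[of N] has_integral_sum[OF _ Fi]] by simp
  have "((\<lambda>x. complex_of_real x ^ k * f (complex_of_real x)) has_integral J) {-1..1}"
  proof (rule has_integral_eq[OF _ IJ(2)])
    fix x :: real assume "x \<in> {-1..1}"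
    then have "complex_of_real x \<in> ball 0 R" using R by auto
    from sums_mult[OF ps[OF this], of "of_real x ^ k"]
    show "suminf (\<lambda>i. F i x) = complex_of_real x ^ k * f (complex_of_real x)"
      by (simp add: F_def sums_iff)
  qed
  then have J: "J = integral {-1..1} (\<lambda>x. complex_of_real x ^ k * f (complex_of_real x))"
    by (simp add: integral_unique)
  have "(\<lambda>N. of_real (1/2) * I N) \<longlonglongrightarrow> of_real (1/2) * J"
    by (intro tendsto_intros IJ(3))
  moreover have "of_real (1/2) * I N = (\<Sum>n<N. complex_of_real (Hmat k n) * c n)" for N
    by (simp add: IN Hmat_def sum_distrib_left mult_ac)
  ultimately show ?thesis
    unfolding sums_def J c_def by simp
qed

lemma full_lemma:
  fixes T :: "real \<Rightarrow> real"
  assumes contT: "continuous_on {a<..<b} T" and cl: "closure (T ` {a..b}) = {-1..1}"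
  shows "{-1<..<1} \<subseteq> T ` {a<..<b}"
proof -
  define C where "C = closure (T ` {a<..<b})"
  have "{a..b} \<subseteq> {a<..<b} \<union> {a,b}" by auto
  then have "T ` {a..b} \<subseteq> T ` {a<..<b} \<union> {T a, T b}" by auto
  then have "closure (T ` {a..b}) \<subseteq> closure (T ` {a<..<b} \<union> {T a, T b})" by (rule closure_mono)
  also have "\<dots> = C \<union> {T a, T b}" unfolding C_def by (simp only: closure_Un closure_insert closure_empty)
  finally have sub: "{-1..1} \<subseteq> C \<union> {T a, T b}" using cl by simp
  have "connected (T ` {a<..<b})" by (rule connected_continuous_image[OF contT]) simp
  then have "convex (T ` {a<..<b})" by (simp add: is_interval_convex_1 flip: is_interval_connected_1)
  then have convC: "convex C" unfolding C_def by (rule convex_closure)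
  have "{-1<..<1} \<subseteq> C"
  proof
    fix y :: real assume y: "y \<in> {-1<..<1}"
    define \<delta> where "\<delta> = min (1+y) (1-y)"
    have "\<delta> > 0" using y by (auto simp: \<delta>_def)
    then have "infinite ({0<..<\<delta>} - {y - T a, T a - y, y - T b, T b - y})"
      by (intro Diff_infinite_finite) auto
    then have "{0<..<\<delta>} - {y - T a, T a - y, y - T b, T b - y} \<noteq> {}"
      by (metis finite.emptyI)
    then obtain t where t: "t \<in> {0<..<\<delta>}" "t \<notin> {y - T a, T a - y, y - T b, T b - y}"
      by blast
    have "y - t \<in> {-1..1}" "y + t \<in> {-1..1}" using t y by (auto simp: \<delta>_def)
    moreover have "y - t \<notin> {T a, T b}" "y + t \<notin> {T a, T b}" using t by auto
    ultimately have yC: "y - t \<in> C" "y + t \<in> C" using sub by blast+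
    have "(1/2) *\<^sub>R (y - t) + (1/2) *\<^sub>R (y + t) \<in> C"
      by (rule convexD[OF convC yC]) auto
    moreover have "(1/2) *\<^sub>R (y - t) + (1/2) *\<^sub>R (y + t) = y" by (simp add: field_simps)
    ultimately show "y \<in> C" by simp
  qed
  then have "interior {-1<..<1} \<subseteq> interior C" by (rule interior_mono)
  also have "interior C = interior (T ` {a<..<b})"
    unfolding C_def by (rule convex_interior_closure) fact
  also have "\<dots> \<subseteq> T ` {a<..<b}" by (rule interior_subset)
  finally show ?thesis by (simp add: interior_open)
qed

lemma const_sign:
  fixes g :: "real \<Rightarrow> real"
  assumes cg: "continuous_on {-1<..<1} g" and nz: "\<And>y. y \<in> {-1<..<1} \<Longrightarrow> g y \<noteq> 0"
    and y: "y \<in> {-1<..<1}"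
  shows "\<bar>g y\<bar> = sgn (g 0) * g y"
proof -
  have "connected (g ` {-1<..<1})" by (rule connected_continuous_image[OF cg]) simp
  then have iv: "is_interval (g ` {-1<..<1})" by (simp add: is_interval_connected_1)
  have 0: "(0::real) \<in> {-1<..<1}" by simp
  have gy: "g y \<in> g ` {-1<..<1}" and g0: "g 0 \<in> g ` {-1<..<1}" using y by auto
  have n0: "0 \<notin> g ` {-1<..<1}" using nz by force
  have "\<not> (g y < 0 \<and> 0 < g 0)" "\<not> (g 0 < 0 \<and> 0 < g y)"
    using iv gy g0 n0 unfolding is_interval_1 by (meson less_imp_le)+
  then show ?thesis using nz[OF y] nz[OF 0]
    by (cases "g 0 > 0"; cases "g y > 0") (auto simp: sgn_if)
qed
lemma branch:
  fixes T :: "real \<Rightarrow> real" and \<phi> :: "complex \<Rightarrow> complex"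
  assumes Tmaps: "T ` {a<..<b} \<subseteq> {-1..1}"
    and Tder: "\<And>x. x \<in> {a<..<b} \<Longrightarrow> \<exists>D. (T has_real_derivative D) (at x) \<and> D \<noteq> 0"
    and full: "{-1<..<1} \<subseteq> T ` {a<..<b}"
    and holo: "\<phi> holomorphic_on ball 0 R" and R: "1 < R"
    and inv: "\<And>x. x \<in> {a<..<b} \<Longrightarrow> \<phi> (of_real (T x)) = of_real x"
  obtains h where "continuous_on {-1..1} h"
    "((\<lambda>x. (T x)^k * x^p) has_integral integral {-1..1} h) {a..b}"
    "\<And>y. y \<in> {-1<..<1} \<Longrightarrow> complex_of_real (h y) =
        sgn (deriv \<phi> 0) * deriv \<phi> (of_real y) * (\<phi> (of_real y))^p * of_real y ^ k"
proof -
  define S where "S = T ` {a<..<b}"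
  define u where "u y = Re (\<phi> (of_real y))" for y
  define u' where "u' y = Re (deriv \<phi> (of_real y))" for y
  have SI: "{-1<..<1} \<subseteq> S" "S \<subseteq> {-1..1}" using full Tmaps by (auto simp: S_def)
  have inball: "complex_of_real y \<in> ball 0 R" if "y \<in> {-1..1}" for y
    using that R unfolding mem_ball dist_0_norm norm_of_real by auto
  have uT: "u (T x) = x" if "x \<in> {a<..<b}" for x using inv[OF that] by (simp add: u_def)
  have \<phi>S: "\<phi> (of_real y) = of_real (u y)" if "y \<in> S" for y
    using that inv by (auto simp: S_def u_def)
  have der\<phi>: "(\<phi> has_field_derivative deriv \<phi> (of_real y)) (at (of_real y))" if "y \<in> {-1..1}" for y
    by (rule holomorphic_derivI[OF holo open_ball inball[OF that]])
  have vd: "((\<lambda>t. \<phi> (of_real t)) has_vector_derivative deriv \<phi> (of_real y)) (at y)" if "y \<in> {-1..1}" for y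
    by (rule has_vector_derivative_real_field[OF der\<phi>[OF that]])
  have du: "(u has_real_derivative u' y) (at y)" if "y \<in> {-1..1}" for y
    using bounded_linear.has_vector_derivative[OF bounded_linear_Re vd[OF that]]
    by (simp add: u_def[abs_def] u'_def has_real_derivative_iff_has_vector_derivative)
  have dIm: "((\<lambda>t. Im (\<phi> (of_real t))) has_real_derivative Im (deriv \<phi> (of_real y))) (at y)"
    if "y \<in> {-1..1}" for y
    using bounded_linear.has_vector_derivative[OF bounded_linear_Im vd[OF that]]
    by (simp add: has_real_derivative_iff_has_vector_derivative)
  have derreal: "deriv \<phi> (of_real y) = of_real (u' y)" if y: "y \<in> {-1<..<1}" for y
  proof -
    have "((\<lambda>t. Im (\<phi> (of_real t))) has_real_derivative 0) (at y)"
    proof (rule has_field_derivative_transform_within_open[OF _ open_greaterThanLessThan y])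
      show "((\<lambda>t. 0) has_real_derivative 0) (at y)" by simp
      show "0 = Im (\<phi> (of_real t))" if "t \<in> {-1<..<1}" for t using \<phi>S[of t] SI that by auto
    qed
    moreover have "y \<in> {-1..1}" using y by auto
    ultimately have "Im (deriv \<phi> (of_real y)) = 0" using dIm by (blast intro: DERIV_unique)
    then show ?thesis by (simp add: u'_def complex_eq_iff)
  qed
  have u'nz: "u' y \<noteq> 0" if "y \<in> S" for y
  proof -
    from that obtain x where x: "x \<in> {a<..<b}" "y = T x" by (auto simp: S_def)
    obtain D where D: "(T has_real_derivative D) (at x)" by (metis Tder[OF x(1)])
    have Tx: "T x \<in> {-1..1}" using Tmaps x(1) by blast
    have "((\<lambda>x. u (T x)) has_real_derivative u' (T x) * D) (at x)"
      by (rule DERIV_chain2[OF du[OF Tx] D])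
    moreover have "((\<lambda>x. u (T x)) has_real_derivative 1) (at x)"
      by (rule has_field_derivative_transform_within_open[OF DERIV_ident open_greaterThanLessThan x(1)])
         (simp add: uT)
    ultimately have "u' (T x) * D = 1" by (rule DERIV_unique)
    then show ?thesis using x by auto
  qed
  have cont_dphi: "continuous_on (ball 0 R) (deriv \<phi>)"
    by (intro holomorphic_on_imp_continuous_on holomorphic_deriv holo open_ball)
  have "continuous_on {-1..1} (\<lambda>y. deriv \<phi> (of_real y))"
    by (rule continuous_on_compose2[OF cont_dphi]) (auto intro: continuous_intros inball)
  then have cu': "continuous_on {-1..1} u'"
    unfolding u'_def by (intro continuous_intros)
  have "continuous_on {-1..1} (\<lambda>y. \<phi> (of_real y))"
    by (rule continuous_on_compose2[OF holomorphic_on_imp_continuous_on[OF holo]])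
       (auto intro: continuous_intros inball)
  then have cu: "continuous_on {-1..1} u"
    unfolding u_def by (intro continuous_intros)
  define h where "h y = \<bar>u' y\<bar> * y^k * u y ^ p" for y
  have ch: "continuous_on {-1..1} h" unfolding h_def by (intro continuous_intros cu cu')
  have sg: "\<bar>u' y\<bar> = sgn (u' 0) * u' y" if "y \<in> {-1<..<1}" for y
    by (rule const_sign[OF _ _ that])
       (use cu' u'nz SI in \<open>auto intro: continuous_on_subset\<close>)
  have pw: "complex_of_real (h y) =
        sgn (deriv \<phi> 0) * deriv \<phi> (of_real y) * (\<phi> (of_real y))^p * of_real y ^ k"
    if y: "y \<in> {-1<..<1}" for y
  proof -
    have z: "(0::real) \<in> {-1<..<1}" by simp
    have d0: "deriv \<phi> 0 = of_real (u' 0)" using derreal[OF z] by simp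
    show ?thesis
      using derreal[OF y] \<phi>S[of y] SI y sg[OF y]
      by (auto simp add: h_def sgn_of_real d0)
  qed
  have compl: "{-1..1} - S \<subseteq> {-1::real,1}"
  proof
    fix x assume x: "x \<in> {-1..1} - S"
    then have "x \<notin> {-1<..<1}" using SI(1) by blast
    with x show "x \<in> {-1,1}" by auto
  qed
  have negab: "negligible {-1::real, 1}" by auto
  have Sleb: "S \<in> sets lebesgue"
  proof -
    have eqS: "S = {-1<..<1} \<union> (S - {-1<..<1})" using SI by auto
    have s1: "S - {-1<..<1} \<in> sets lebesgue"
      by (rule negligible_imp_sets, rule negligible_subset[OF negab]) (use SI in auto)
    have s2: "{-1<..<1::real} \<in> sets lebesgue" by (intro fmeasurableD lmeasurable_open) auto
    show ?thesis by (subst eqS) (rule sets.Un[OF s2 s1])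
  qed
  have der_within: "(u has_field_derivative u' y) (at y within S)" if "y \<in> S" for y
    by (rule has_field_derivative_at_within, rule du) (use SI that in blast)
  have inj: "inj_on u S" unfolding inj_on_def S_def using uT by auto
  have img: "u ` S = {a<..<b}" unfolding S_def using uT by (force simp: image_image)
  have hI: "h absolutely_integrable_on {-1..1}" by (rule absolutely_integrable_continuous_real[OF ch])
  have hS: "h absolutely_integrable_on S"
  proof (subst absolutely_integrable_spike_set_eq)
    have "{x \<in> S - {-1..1}. h x \<noteq> 0} = {}" using SI by blast
      then show "negligible {x \<in> S - {-1..1}. h x \<noteq> 0}" by (simp only: negligible_empty)
    show "negligible {x \<in> {-1..1} - S. h x \<noteq> 0}"
      by (rule negligible_subset[OF negab]) (use compl in blast)
  qed (rule hI)
  have eqS: "\<bar>u' y\<bar> * ((T (u y))^k * (u y)^p) = h y" if "y \<in> S" for y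
    using that uT unfolding S_def h_def by auto
  have "(\<lambda>y. \<bar>u' y\<bar> * ((T (u y))^k * (u y)^p)) absolutely_integrable_on S"
    by (rule absolutely_integrable_spike[OF hS negligible_empty]) (use eqS in auto)
  then have "(\<lambda>x. (T x)^k * x^p) absolutely_integrable_on {a<..<b} \<and>
      integral {a<..<b} (\<lambda>x. (T x)^k * x^p) = integral S (\<lambda>y. \<bar>u' y\<bar> * ((T (u y))^k * (u y)^p))"
    using has_absolute_integral_change_of_variables_1'[OF Sleb der_within inj,
        of "\<lambda>x. (T x)^k * x^p" "integral S (\<lambda>y. \<bar>u' y\<bar> * ((T (u y))^k * (u y)^p))"]
    by (simp add: img)
  moreover have "integral S (\<lambda>y. \<bar>u' y\<bar> * ((T (u y))^k * (u y)^p)) = integral S h"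
    by (rule integral_cong) (rule eqS)
  moreover have "integral S h = integral {-1..1} h"
  proof -
    have "(h has_integral integral {-1..1} h) {-1..1}"
      using ch by (intro integrable_integral integrable_continuous_real)
    then have "(h has_integral integral {-1..1} h) S"
    proof (subst has_integral_spike_set_eq)
      have "{x \<in> S - {-1..1}. h x \<noteq> 0} = {}" using SI by blast
      then show "negligible {x \<in> S - {-1..1}. h x \<noteq> 0}" by (simp only: negligible_empty)
      show "negligible {x \<in> {-1..1} - S. h x \<noteq> 0}"
        by (rule negligible_subset[OF negab]) (use compl in blast)
    qed
    then show ?thesis by (rule integral_unique)
  qed
  ultimately have ab: "((\<lambda>x. (T x)^k * x^p) has_integral integral {-1..1} h) {a<..<b}"
    by (metis absolutely_integrable_on_def integrable_integral)
  have "((\<lambda>x. (T x)^k * x^p) has_integral integral {-1..1} h) {a..b}"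
  proof (subst has_integral_spike_set_eq)
    show "negligible {x \<in> {a..b} - {a<..<b}. (T x)^k * x^p \<noteq> 0}"
      by (rule negligible_subset[of "{a,b}"]) auto
    show "negligible {x \<in> {a<..<b} - {a..b}. (T x)^k * x^p \<noteq> 0}"
    proof -
      have "{x \<in> {a<..<b} - {a..b}. (T x)^k * x^p \<noteq> 0} = {}" by auto
      then show ?thesis by (simp only: negligible_empty)
    qed
  qed (rule ab)
  then show thesis using that ch pw by blast
qed
theorem lemma8:
  fixes T :: "real \<Rightarrow> real"
    and d :: nat
    and I :: "nat \<Rightarrow> real set"
    and \<phi> :: "nat \<Rightarrow> complex \<Rightarrow> complex"
    and r R \<rho> :: real
  assumes T_maps: "T ` {-1..1} \<subseteq> {-1..1}"
    and I_closed: "\<And>l. l < d \<Longrightarrow> \<exists>a b. I l = {a..b}"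
    and I_cover: "(\<Union>l<d. I l) = {-1..1}"
    and I_disj: "\<And>l m. l < d \<Longrightarrow> m < d \<Longrightarrow> l \<noteq> m \<Longrightarrow> interior (I l) \<inter> interior (I m) = {}"
    and T_analytic: "\<And>l. l < d \<Longrightarrow> real_analytic_on T (interior (I l))"
    and T_inj: "\<And>l. l < d \<Longrightarrow> inj_on T (interior (I l))"
    and T_diffeo: "\<And>l x. l < d \<Longrightarrow> x \<in> interior (I l) \<Longrightarrow>
                     \<exists>D. (T has_real_derivative D) (at x) \<and> D \<noteq> 0"
    and T_full: "\<And>l. l < d \<Longrightarrow> closure (T ` I l) = {-1..1}"
    and radii: "1 < r" "r < R" "r < \<rho>" "\<rho> < R"
    and \<phi>_holo: "\<And>l. l < d \<Longrightarrow> \<phi> l holomorphic_on ball 0 R"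
    and \<phi>_bdd: "\<And>l. l < d \<Longrightarrow> bounded (\<phi> l ` ball 0 R)"
    and \<phi>_into: "(\<Union>l<d. \<phi> l ` ball 0 R) \<subseteq> ball 0 r"
    and \<phi>_inv: "\<And>l x. l < d \<Longrightarrow> x \<in> interior (I l) \<Longrightarrow>
                   \<phi> l (complex_of_real (T x)) = complex_of_real x"
  shows "(\<lambda>n. complex_of_real (Hmat k n) * complex_of_real (\<rho> powi (- int n)) * Lmat \<rho> d \<phi> n l
               * complex_of_real (\<rho> ^ l))
         sums complex_of_real (Gmat T k l)"
proof -
  have rho0: "0 < \<rho>" and R1: "1 < R" using radii by auto
  obtain A B where AB: "\<And>j. j < d \<Longrightarrow> I j = {A j..B j}"
    using I_closed by metis
  have Isub: "I j \<subseteq> {-1..1}" if "j < d" for j using I_cover that by blast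
  have intI: "interior (I j) = {A j<..<B j}" if "j < d" for j using AB[OF that] by simp
  have "\<exists>h. continuous_on {-1..1} h \<and>
      ((\<lambda>x. (T x)^k * x^l) has_integral integral {-1..1} h) (I j) \<and>
      (\<forall>y\<in>{-1<..<1}. complex_of_real (h y) =
        sgn (deriv (\<phi> j) 0) * deriv (\<phi> j) (of_real y) * (\<phi> j (of_real y))^l * of_real y ^ k)"
    if j: "j < d" for j
  proof -
    have contT: "continuous_on {A j<..<B j} T"
    proof (intro continuous_at_imp_continuous_on ballI)
      fix x assume "x \<in> {A j<..<B j}"
      then obtain D where "(T has_real_derivative D) (at x)" using T_diffeo[OF j] intI[OF j] by metis
      then show "isCont T x" by (rule DERIV_isCont)
    qed
    have full: "{-1<..<1} \<subseteq> T ` {A j<..<B j}"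
      by (rule full_lemma[OF contT]) (use T_full[OF j] AB[OF j] in simp)
    have Tm: "T ` {A j<..<B j} \<subseteq> {-1..1}" using T_maps Isub[OF j] AB[OF j] by fastforce
    obtain h where "continuous_on {-1..1} h"
      "((\<lambda>x. (T x)^k * x^l) has_integral integral {-1..1} h) {A j..B j}"
      "\<And>y. y \<in> {-1<..<1} \<Longrightarrow> complex_of_real (h y) =
        sgn (deriv (\<phi> j) 0) * deriv (\<phi> j) (of_real y) * (\<phi> j (of_real y))^l * of_real y ^ k"
      by (rule branch[OF Tm _ full \<phi>_holo[OF j] R1, of k l])
         (use T_diffeo[OF j] \<phi>_inv[OF j] intI[OF j] in auto)
    then show ?thesis unfolding AB[OF j] by blast
  qed
  then have "\<forall>j. \<exists>h. j < d \<longrightarrow> (continuous_on {-1..1} h \<and>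
      ((\<lambda>x. (T x)^k * x^l) has_integral integral {-1..1} h) (I j) \<and>
      (\<forall>y\<in>{-1<..<1}. complex_of_real (h y) =
        sgn (deriv (\<phi> j) 0) * deriv (\<phi> j) (of_real y) * (\<phi> j (of_real y))^l * of_real y ^ k))"
    by blast
  then have "\<exists>H. \<forall>j. j < d \<longrightarrow> (continuous_on {-1..1} (H j) \<and>
      ((\<lambda>x. (T x)^k * x^l) has_integral integral {-1..1} (H j)) (I j) \<and>
      (\<forall>y\<in>{-1<..<1}. complex_of_real (H j y) =
        sgn (deriv (\<phi> j) 0) * deriv (\<phi> j) (of_real y) * (\<phi> j (of_real y))^l * of_real y ^ k))"
    by (rule choice)
  then obtain H where H: "\<And>j. j < d \<Longrightarrow> continuous_on {-1..1} (H j)"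
    "\<And>j. j < d \<Longrightarrow> ((\<lambda>x. (T x)^k * x^l) has_integral integral {-1..1} (H j)) (I j)"
    "\<And>j y. j < d \<Longrightarrow> y \<in> {-1<..<1} \<Longrightarrow> complex_of_real (H j y) =
        sgn (deriv (\<phi> j) 0) * deriv (\<phi> j) (of_real y) * (\<phi> j (of_real y))^l * of_real y ^ k"
    by blast
  have "((\<lambda>x. (T x)^k * x^l) has_integral (\<Sum>j<d. integral {-1..1} (H j))) (\<Union>j<d. I j)"
  proof (rule has_integral_UN)
    show "pairwise (\<lambda>i i'. negligible (I i \<inter> I i')) {..<d}"
    proof (clarsimp simp: pairwise_def)
      fix i i' assume ii: "i < d" "i' < d" "i \<noteq> i'"
      have "I i \<inter> I i' \<subseteq> {A i, B i, A i', B i'}"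
        using I_disj[OF ii] intI[OF ii(1)] intI[OF ii(2)] AB[OF ii(1)] AB[OF ii(2)] by auto
      then show "negligible (I i \<inter> I i')" by (rule negligible_subset[rotated]) auto
    qed
  qed (use H in auto)
  then have Gint: "((\<lambda>x. (T x)^k * x^l) has_integral (\<Sum>j<d. integral {-1..1} (H j))) {-1..1}"
    using I_cover by simp
  have G: "Gmat T k l = (1/2) * (\<Sum>j<d. integral {-1..1} (H j))"
    unfolding Gmat_def using integral_unique[OF Gint] by simp
  define f where "f = transfer_op d \<phi> (hardy_basis \<rho> l)"
  have holf: "f holomorphic_on ball 0 R"
  proof -
    have "(\<lambda>z. sgn (deriv (\<phi> j) 0) * deriv (\<phi> j) z * (\<phi> j z / of_real \<rho>) ^ l) holomorphic_on ball 0 R"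
      if j: "j < d" for j
    proof -
      have hd: "deriv (\<phi> j) holomorphic_on ball 0 R" by (rule holomorphic_deriv[OF \<phi>_holo[OF j] open_ball])
      have hp: "\<phi> j holomorphic_on ball 0 R" by (rule \<phi>_holo[OF j])
      show ?thesis using hd hp rho0 by (intro holomorphic_intros) auto
    qed
    then show ?thesis unfolding f_def transfer_op_def hardy_basis_def
      by (intro holomorphic_on_sum) auto
  qed
  have Lm: "Lmat \<rho> d \<phi> n l = (deriv ^^ n) f 0 / fact n * of_real \<rho> ^ n" for n
    unfolding Lmat_def f_def[symmetric] using hardy_coeff[OF holf rho0] radii by simp
  have pw1: "complex_of_real \<rho> powi (- int n) * complex_of_real \<rho> ^ n = 1" for n
    using rho0 by (simp add: power_int_minus)
  have pw1': "complex_of_real (\<rho> powi (- int n)) * of_real \<rho> ^ n = 1" for n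
    using pw1[of n] by simp
  have terms: "complex_of_real (Hmat k n) * complex_of_real (\<rho> powi (- int n)) * Lmat \<rho> d \<phi> n l
               * complex_of_real (\<rho> ^ l) = complex_of_real (Hmat k n) * ((deriv ^^ n) f 0 / fact n) * of_real (\<rho> ^ l)" for n
  proof -
    have "complex_of_real (Hmat k n) * complex_of_real (\<rho> powi (- int n)) * Lmat \<rho> d \<phi> n l
          = complex_of_real (Hmat k n) * ((deriv ^^ n) f 0 / fact n) * (complex_of_real (\<rho> powi (- int n)) * of_real \<rho> ^ n)"
      by (simp add: Lm mult_ac)
    then show ?thesis by (simp only: pw1' mult_1_right)
  qed
  have sums1: "(\<lambda>n. complex_of_real (Hmat k n) * ((deriv ^^ n) f 0 / fact n) * of_real (\<rho> ^ l)) sums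
     ((of_real (1/2) * integral {-1..1} (\<lambda>x. of_real x ^ k * f (of_real x))) * of_real (\<rho> ^ l))"
    by (rule sums_mult2[OF series_integral[OF holf R1]])
  have intsum: "((\<lambda>x. complex_of_real (\<Sum>j<d. H j x)) has_integral complex_of_real (\<Sum>j<d. integral {-1..1} (H j))) {-1..1}"
  proof -
    have "((\<lambda>x. \<Sum>j<d. H j x) has_integral (\<Sum>j<d. integral {-1..1} (H j))) {-1..1}"
      using H(1) by (intro has_integral_sum integrable_integral integrable_continuous_real) auto
    from has_integral_linear[OF this bounded_linear_of_real] show ?thesis by (simp add: o_def)
  qed
  have "((\<lambda>x. complex_of_real (\<Sum>j<d. H j x) / of_real (\<rho> ^ l)) has_integral
        complex_of_real (\<Sum>j<d. integral {-1..1} (H j)) / of_real (\<rho> ^ l)) {-1..1}"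
    using has_integral_mult_left[OF intsum, of "inverse (of_real (\<rho> ^ l))"] by (simp add: divide_inverse)
  then have "((\<lambda>x. of_real x ^ k * f (of_real x)) has_integral
        complex_of_real (\<Sum>j<d. integral {-1..1} (H j)) / of_real (\<rho> ^ l)) {-1..1}"
  proof (rule has_integral_spike[of "{-1,1}", rotated 2])
    fix x :: real assume x: "x \<in> {-1..1} - {-1, 1}"
    then have x': "x \<in> {-1<..<1}" by auto
    have "complex_of_real (\<Sum>j<d. H j x) = (\<Sum>j<d. sgn (deriv (\<phi> j) 0) * deriv (\<phi> j) (of_real x) * (\<phi> j (of_real x))^l * of_real x ^ k)"
      using H(3)[OF _ x'] by simp
    then show "of_real x ^ k * f (of_real x) = complex_of_real (\<Sum>j<d. H j x) / of_real (\<rho> ^ l)"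
      using rho0 unfolding f_def transfer_op_def hardy_basis_def
      by (simp add: sum_divide_distrib sum_distrib_left power_divide mult_ac)
  qed auto
  then have "integral {-1..1} (\<lambda>x. of_real x ^ k * f (of_real x)) =
        complex_of_real (\<Sum>j<d. integral {-1..1} (H j)) / of_real (\<rho> ^ l)"
    by (rule integral_unique)
  then have "(of_real (1/2) * integral {-1..1} (\<lambda>x. of_real x ^ k * f (of_real x))) * of_real (\<rho> ^ l)
      = complex_of_real (Gmat T k l)"
    using rho0 by (simp add: G)
  with sums1 have "(\<lambda>n. complex_of_real (Hmat k n) * ((deriv ^^ n) f 0 / fact n) * of_real (\<rho> ^ l)) sums
      complex_of_real (Gmat T k l)" by (simp only:)
  then show ?thesis unfolding terms .
qed

end
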